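(* Let $D$ be a positive integer and let $H$ be a loopless multigraph such that each edge of $H$ shares at least one endpoint with all but at most $D-2$ of the other edges of $H$, and let $H_0$ be its underlying simple graph. (i) If $H_0$ is the complete graph $K_h$ with $h\ge 6$, then $|E(H)|\le \frac52(D-2)$. (ii) If $H_0$ is $K_h$ minus one edge with $h\ge 7$, then $|E(H)|\le \frac{20}{9}(D-2)$. (iii) If $H_0$ is $K_6$ minus one edge, then $|E(H)|\le \frac{22}{9}(D-2)$.
   Context: The underlying simple graph $H_0$ of a multigraph $H$ has vertex set $V(H)$ and an edge $vw$ whenever $H$ has at least one edge between $v$ and $w$. $K_h$ denotes the complete graph on $h$ vertices. *)

theory Defs
  imports Complex_Main
begin

definition loopless_multigraph :: "'a set \<Rightarrow> 'e set \<Rightarrow> ('e \<Rightarrow> 'a set) \<Rightarrow> bool" where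
  "loopless_multigraph V E ends \<longleftrightarrow> finite V \<and> finite E \<and>
     (\<forall>e\<in>E. ends e \<subseteq> V \<and> card (ends e) = 2)"

definition underlying_edges :: "'e set \<Rightarrow> ('e \<Rightarrow> 'a set) \<Rightarrow> 'a set set" where
  "underlying_edges E ends = ends ` E"

definition is_complete_graph :: "'a set \<Rightarrow> 'a set set \<Rightarrow> nat \<Rightarrow> bool" where
  "is_complete_graph V F h \<longleftrightarrow> card V = h \<and> F = {{v, w} | v w. v \<in> V \<and> w \<in> V \<and> v \<noteq> w}"

definition is_complete_minus_edge :: "'a set \<Rightarrow> 'a set set \<Rightarrow> nat \<Rightarrow> bool" where
  "is_complete_minus_edge V F h \<longleftrightarrow> card V = h \<and>
     (\<exists>x y. x \<in> V \<and> y \<in> V \<and> x \<noteq> y \<and>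
        F = {{v, w} | v w. v \<in> V \<and> w \<in> V \<and> v \<noteq> w} - {{x, y}})"

definition meets_all_but :: "'e set \<Rightarrow> ('e \<Rightarrow> 'a set) \<Rightarrow> int \<Rightarrow> bool" where
  "meets_all_but E ends k \<longleftrightarrow>
     (\<forall>e\<in>E. int (card {f \<in> E. f \<noteq> e \<and> ends f \<inter> ends e = {}}) \<le> k)"

end

theory Submission
  imports Defs
begin

definition p2 :: "'a set \<Rightarrow> 'a set set" where "p2 S = {q. q \<subseteq> S \<and> card q = 2}"

lemma card_p2: "finite S \<Longrightarrow> card (p2 S) = card S choose 2"
  unfolding p2_def by (rule n_subsets)

lemma finite_p2: "finite S \<Longrightarrow> finite (p2 S)"
  unfolding p2_def by (rule finite_subset[of _ "Pow S"]) auto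

lemma pairs_eq_p2: "{{v, w} | v w. v \<in> V \<and> w \<in> V \<and> v \<noteq> w} = p2 V"
  unfolding p2_def by (auto simp: card_2_iff)

lemma p2_disj: "{q \<in> p2 V. q \<inter> A = {}} = p2 (V - A)"
  unfolding p2_def by auto

lemma two_choose: "2 * (n choose 2) = n * (n - 1)"
proof -
  have "even (n * (n - 1))" by (cases n) auto
  thus ?thesis by (simp add: choose_two)
qed

lemma card_filter_sum:
  "finite A \<Longrightarrow> card {x\<in>A. P x} = (\<Sum>x\<in>A. if P x then 1 else 0)"
  by (simp add: sum.inter_filter[symmetric])

lemma dc:
  assumes "finite E" "finite G"
  shows "(\<Sum>q\<in>G. card {f\<in>E. ends f \<inter> q = {}}) = (\<Sum>f\<in>E. card {q\<in>G. q \<inter> ends f = {}})"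
proof -
  have "(\<Sum>q\<in>G. card {f\<in>E. ends f \<inter> q = {}}) = (\<Sum>q\<in>G. \<Sum>f\<in>E. if ends f \<inter> q = {} then 1 else 0)"
    using assms(1) by (simp only: card_filter_sum)
  also have "\<dots> = (\<Sum>f\<in>E. \<Sum>q\<in>G. if ends f \<inter> q = {} then 1 else 0)" by (rule sum.swap)
  also have "\<dots> = (\<Sum>f\<in>E. \<Sum>q\<in>G. if q \<inter> ends f = {} then 1 else 0)" by (simp only: Int_commute)
  also have "\<dots> = (\<Sum>f\<in>E. card {q\<in>G. q \<inter> ends f = {}})"
    using assms(2) by (simp only: card_filter_sum)
  finally show ?thesis .
qed

lemma disj_bound:
  assumes lm: "loopless_multigraph V E ends" and m: "meets_all_but E ends K"
    and q: "q \<in> underlying_edges E ends"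
  shows "int (card {f\<in>E. ends f \<inter> q = {}}) \<le> K"
proof -
  from q obtain e where e: "e \<in> E" "q = ends e" unfolding underlying_edges_def by auto
  have "card (ends e) = 2" using lm e unfolding loopless_multigraph_def by auto
  hence "ends e \<noteq> {}" by auto
  hence "{f\<in>E. ends f \<inter> q = {}} = {f\<in>E. f \<noteq> e \<and> ends f \<inter> ends e = {}}" using e by auto
  thus ?thesis using m e unfolding meets_all_but_def by auto
qed

lemma sum_bound:
  assumes lm: "loopless_multigraph V E ends" and m: "meets_all_but E ends K"
    and G: "G \<subseteq> underlying_edges E ends"
  shows "int (\<Sum>q\<in>G. card {f\<in>E. ends f \<inter> q = {}}) \<le> int (card G) * K"
proof -
  have "(\<Sum>q\<in>G. int (card {f\<in>E. ends f \<inter> q = {}})) \<le> of_nat (card G) * K"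
    by (rule sum_bounded_above) (use disj_bound[OF lm m] G in auto)
  thus ?thesis by simp
qed

lemma ends_facts:
  assumes lm: "loopless_multigraph V E ends" and f: "f \<in> E"
  shows "ends f \<subseteq> V" "card (ends f) = 2" "finite V" "finite E"
  using assms unfolding loopless_multigraph_def by auto

lemma ineq1: "(h::nat) \<ge> 6 \<Longrightarrow> 2 * (h * (h - 1)) \<le> 5 * ((h - 2) * (h - 2 - 1))"
proof -
  assume "h \<ge> 6" then obtain k where "h = k + 6" by (metis le_add_diff_inverse2)
  thus ?thesis by (simp add: algebra_simps)
qed

lemma ineq2: "(h::nat) \<ge> 7 \<Longrightarrow> 9 * (h * (h - 1)) + 22 \<le> 20 * ((h - 2) * (h - 2 - 1)) \<and> 20 \<le> (h - 2) * (h - 2 - 1)"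
proof -
  assume "h \<ge> 7" then obtain k where "h = k + 7" by (metis le_add_diff_inverse2)
  thus ?thesis by (simp add: algebra_simps)
qed

lemma fin_real:
  fixes a b c K p r :: real
  assumes h1: "c * a \<le> b * K" and h2: "p * b \<le> r * a" and a: "a > 0" and b: "b > 0"
    and c: "c \<ge> 0" and p: "p > 0"
  shows "c \<le> r / p * K"
proof -
  have "0 \<le> c * a" using c a by simp
  hence "0 \<le> b * K" using h1 by linarith
  hence K: "K \<ge> 0" using b by (simp add: zero_le_mult_iff)
  have "p * (c * a) \<le> p * (b * K)" using h1 p by (rule mult_left_mono[OF _ less_imp_le])
  also have "p * (b * K) = (p * b) * K" by (simp only: mult.assoc)
  also have "\<dots> \<le> (r * a) * K" using h2 K by (rule mult_right_mono)
  finally have "(p * c) * a \<le> (r * K) * a" by (simp only: ac_simps)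
  hence pc: "p * c \<le> r * K" using a by (rule mult_right_le_imp_le)
  have "c \<le> (r * K) / p" using pc p by (simp add: pos_le_divide_eq mult.commute)
  thus ?thesis by simp
qed

lemma part1:
  assumes lm: "loopless_multigraph V E ends" and m: "meets_all_but E ends K"
    and h: "h \<ge> 6" and cg: "is_complete_graph V (underlying_edges E ends) h"
  shows "real (card E) \<le> 5 / 2 * real_of_int K"
proof -
  have fV: "finite V" and fE: "finite E" using lm unfolding loopless_multigraph_def by auto
  have cV: "card V = h" and F: "underlying_edges E ends = p2 V"
    using cg pairs_eq_p2[of V] unfolding is_complete_graph_def by auto
  define a where "a = (h - 2) choose 2"
  define b where "b = h choose 2"
  have "int (\<Sum>q\<in>p2 V. card {f\<in>E. ends f \<inter> q = {}}) \<le> int (card (p2 V)) * K"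
    by (rule sum_bound[OF lm m]) (simp add: F)
  hence 1: "int (\<Sum>q\<in>p2 V. card {f\<in>E. ends f \<inter> q = {}}) \<le> int b * K"
    using card_p2[OF fV] cV b_def by simp
  have "(\<Sum>q\<in>p2 V. card {f\<in>E. ends f \<inter> q = {}}) = (\<Sum>f\<in>E. card {q\<in>p2 V. q \<inter> ends f = {}})"
    by (rule dc[OF fE finite_p2[OF fV]])
  also have "\<dots> = (\<Sum>f\<in>E. a)"
  proof (rule sum.cong[OF refl])
    fix f assume f: "f \<in> E"
    have "card (V - ends f) = h - 2"
      using ends_facts[OF lm f] cV by (simp add: card_Diff_subset finite_subset)
    thus "card {q\<in>p2 V. q \<inter> ends f = {}} = a"
      unfolding p2_disj a_def using card_p2[of "V - ends f"] fV by simp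
  qed
  also have "\<dots> = card E * a" by simp
  finally have "int (card E * a) \<le> int b * K" using 1 by simp
  hence h1: "real (card E) * real a \<le> real b * real_of_int K"
    using of_int_le_iff[where 'a=real, of "int (card E * a)" "int b * K"] by simp
  have e1: "2 * b = h * (h - 1)" unfolding b_def by (rule two_choose)
  have e2: "2 * a = (h - 2) * (h - 2 - 1)" unfolding a_def by (rule two_choose)
  have "2 * (2 * b) \<le> 5 * (2 * a)" unfolding e1 e2 by (rule ineq1[OF h])
  hence h2: "2 * real b \<le> 5 * real a" by linarith
  have "(h - 2) * (h - 2 - 1) > 0" by (intro mult_pos_pos) (use h in auto)
  hence "2 * a > 0" by (simp only: e2)
  hence "real a > 0" by simp
  moreover have "h * (h - 1) > 0" by (intro mult_pos_pos) (use h in auto)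
  hence "2 * b > 0" by (simp only: e1)
  hence "real b > 0" by simp
  ultimately show ?thesis using fin_real[OF h1 h2] by simp
qed

lemma part2:
  assumes lm: "loopless_multigraph V E ends" and m: "meets_all_but E ends K"
    and h: "h \<ge> 7" and cg: "is_complete_minus_edge V (underlying_edges E ends) h"
  shows "real (card E) \<le> 20 / 9 * real_of_int K"
proof -
  have fV: "finite V" and fE: "finite E" using lm unfolding loopless_multigraph_def by auto
  obtain x y where xy: "x \<in> V" "y \<in> V" "x \<noteq> y" and cV: "card V = h"
    and F: "underlying_edges E ends = p2 V - {{x, y}}"
    using cg pairs_eq_p2[of V] unfolding is_complete_minus_edge_def by auto
  have xyin: "{x, y} \<in> p2 V" using xy unfolding p2_def by auto
  define a where "a = (h - 2) choose 2"
  define b where "b = h choose 2"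
  have cF: "card (p2 V - {{x, y}}) = b - 1"
    using xyin card_p2[OF fV] cV b_def by simp
  have fF: "finite (p2 V - {{x, y}})" using finite_p2[OF fV] by simp
  have "int (\<Sum>q\<in>p2 V - {{x, y}}. card {f\<in>E. ends f \<inter> q = {}}) \<le> int (card (p2 V - {{x, y}})) * K"
    by (rule sum_bound[OF lm m]) (simp add: F)
  hence 1: "int (\<Sum>q\<in>p2 V - {{x, y}}. card {f\<in>E. ends f \<inter> q = {}}) \<le> int (b - 1) * K"
    using cF by simp
  have "card E * (a - 1) = (\<Sum>f\<in>E. a - 1)" by simp
  also have "\<dots> \<le> (\<Sum>f\<in>E. card {q\<in>p2 V - {{x, y}}. q \<inter> ends f = {}})"
  proof (rule sum_mono)
    fix f assume f: "f \<in> E"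
    have "card (V - ends f) = h - 2"
      using ends_facts[OF lm f] cV by (simp add: card_Diff_subset finite_subset)
    hence "card (p2 (V - ends f)) = a" unfolding a_def using card_p2[of "V - ends f"] fV by simp
    moreover have "{q\<in>p2 V - {{x, y}}. q \<inter> ends f = {}} = p2 (V - ends f) - {{x, y}}"
      using p2_disj[of V "ends f"] by auto
    ultimately show "a - 1 \<le> card {q\<in>p2 V - {{x, y}}. q \<inter> ends f = {}}"
      by (simp add: card_Diff_singleton_if)
  qed
  also have "\<dots> = (\<Sum>q\<in>p2 V - {{x, y}}. card {f\<in>E. ends f \<inter> q = {}})"
    by (rule dc[OF fE fF, symmetric])
  finally have "int (card E * (a - 1)) \<le> int (b - 1) * K" using 1 by linarith
  hence h1: "real (card E) * real (a - 1) \<le> real (b - 1) * real_of_int K"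
    using of_int_le_iff[where 'a=real, of "int (card E * (a - 1))" "int (b - 1) * K"] by simp
  have e1: "2 * b = h * (h - 1)" unfolding b_def by (rule two_choose)
  have e2: "2 * a = (h - 2) * (h - 2 - 1)" unfolding a_def by (rule two_choose)
  have i2: "9 * (2 * b) + 22 \<le> 20 * (2 * a) \<and> 20 \<le> 2 * a" unfolding e1 e2 by (rule ineq2[OF h])
  have "h * (h - 1) \<ge> 7 * 6" by (intro mult_le_mono) (use h in auto)
  hence "2 * b \<ge> 42" by (simp only: e1)
  hence h2: "9 * (b - 1) \<le> 20 * (a - 1)" and ap: "a - 1 > 0" and bp: "b - 1 > 0" using i2 by linarith+
  from h2 have h2': "9 * real (b - 1) \<le> 20 * real (a - 1)" by linarith
  show ?thesis using fin_real[OF h1 h2'] ap bp by simp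
qed

lemma part3:
  assumes lm: "loopless_multigraph V E ends" and m: "meets_all_but E ends K"
    and cg: "is_complete_minus_edge V (underlying_edges E ends) 6"
  shows "real (card E) \<le> 22 / 9 * real_of_int K"
proof -
  have fV: "finite V" and fE: "finite E" using lm unfolding loopless_multigraph_def by auto
  obtain x y where xy: "x \<in> V" "y \<in> V" "x \<noteq> y" and cV: "card V = 6"
    and F: "underlying_edges E ends = p2 V - {{x, y}}"
    using cg pairs_eq_p2[of V] unfolding is_complete_minus_edge_def by auto
  have xyin: "{x, y} \<in> p2 V" using xy unfolding p2_def by auto
  define FF where "FF = p2 V - {{x, y}}"
  define FB where "FB = p2 (V - {x, y})"
  define FA where "FA = FF - FB"
  have fF: "finite FF" using finite_p2[OF fV] FF_def by simp
  have FBsub: "FB \<subseteq> FF" unfolding FB_def FF_def p2_def by auto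
  have cFF: "card FF = 14" using xyin card_p2[OF fV] cV FF_def by (simp add: choose_two)
  have cVxy: "card (V - {x, y}) = 4" using xy cV fV by (simp add: card_Diff_subset)
  have cFB: "card FB = 6" using card_p2[of "V - {x, y}"] fV cVxy FB_def by (simp add: choose_two)
  have cFA: "card FA = 8" using card_Diff_subset[OF finite_subset[OF FBsub fF] FBsub] cFF cFB FA_def by simp
  let ?d = "\<lambda>q. card {f\<in>E. ends f \<inter> q = {}}"
  have SF: "int (\<Sum>q\<in>FF. ?d q) \<le> int 14 * K"
    using sum_bound[OF lm m, of FF] F FF_def cFF by simp
  have SA: "int (\<Sum>q\<in>FA. ?d q) \<le> int 8 * K"
    using sum_bound[OF lm m, of FA] F FF_def FA_def cFA by auto
  have split: "(\<Sum>q\<in>FF. ?d q) = (\<Sum>q\<in>FA. ?d q) + (\<Sum>q\<in>FB. ?d q)"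
    unfolding FA_def by (rule sum.subset_diff[OF FBsub fF])
  have key: "9 * card E + (\<Sum>q\<in>FB. ?d q) \<le> 2 * (\<Sum>q\<in>FF. ?d q)"
  proof -
    have "9 * card E + (\<Sum>q\<in>FB. ?d q) = (\<Sum>f\<in>E. 9 + card {q\<in>FB. q \<inter> ends f = {}})"
      using dc[OF fE finite_subset[OF FBsub fF]] by (simp add: sum.distrib)
    also have "\<dots> \<le> (\<Sum>f\<in>E. 2 * card {q\<in>FF. q \<inter> ends f = {}})"
    proof (rule sum_mono)
      fix f assume f: "f \<in> E"
      note ef = ends_facts[OF lm f]
      have fne: "ends f \<noteq> {x, y}" using f F unfolding underlying_edges_def by auto
      have cVf: "card (V - ends f) = 4"
        using ef cV by (simp add: card_Diff_subset finite_subset)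
      hence cp: "card (p2 (V - ends f)) = 6" using card_p2[of "V - ends f"] fV by (simp add: choose_two)
      have eqF: "{q\<in>FF. q \<inter> ends f = {}} = p2 (V - ends f) - {{x, y}}"
        using p2_disj[of V "ends f"] FF_def by auto
      have eqB: "{q\<in>FB. q \<inter> ends f = {}} = p2 (V - ({x, y} \<union> ends f))"
      proof -
        have "V - {x, y} - ends f = V - ({x, y} \<union> ends f)" by auto
        thus ?thesis using p2_disj[of "V - {x, y}" "ends f"] FB_def by simp
      qed
      have fU: "finite ({x, y} \<union> ends f)" using ef fV by (meson finite_subset finite_Un finite.intros)
      have Usub: "{x, y} \<union> ends f \<subseteq> V" using ef xy by auto
      have cB: "card (V - ({x, y} \<union> ends f)) = 6 - card ({x, y} \<union> ends f)"
        using card_Diff_subset[OF fU Usub] cV by simp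
      have fe: "finite (ends f)" using ef fV finite_subset by blast
      have cUI: "card ({x, y} \<union> ends f) + card ({x, y} \<inter> ends f) = 2 + 2"
        using card_Un_Int[of "{x, y}" "ends f"] fe ef xy by simp
      show "9 + card {q\<in>FB. q \<inter> ends f = {}} \<le> 2 * card {q\<in>FF. q \<inter> ends f = {}}"
      proof (cases "{x, y} \<inter> ends f = {}")
        case True
        have "{x, y} \<in> p2 (V - ends f)" using True xy unfolding p2_def by auto
        hence c1: "card {q\<in>FF. q \<inter> ends f = {}} = 5" unfolding eqF using cp by (simp add: card_Diff_singleton_if)
        have "card ({x, y} \<union> ends f) = 4" using cUI True by simp
        hence "card {q\<in>FB. q \<inter> ends f = {}} = 1" unfolding eqB
          using card_p2[of "V - ({x, y} \<union> ends f)"] fV cB by simp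
        thus ?thesis using c1 by simp
      next
        case False
        have "{x, y} \<notin> p2 (V - ends f)" using False unfolding p2_def by auto
        hence c1: "card {q\<in>FF. q \<inter> ends f = {}} = 6" unfolding eqF using cp by simp
        have ci: "card ({x, y} \<inter> ends f) \<noteq> 0" using False fe by simp
        have "card ({x, y} \<inter> ends f) \<noteq> 2"
        proof
          assume c2: "card ({x, y} \<inter> ends f) = 2"
          have "{x, y} \<inter> ends f = {x, y}"
            by (rule card_subset_eq) (use c2 xy in auto)
          moreover have "{x, y} \<inter> ends f = ends f"
            by (rule card_subset_eq) (use c2 ef fe in auto)
          ultimately show False using fne by simp
        qed
        moreover have "card ({x, y} \<inter> ends f) \<le> 2"
          using card_mono[OF fe, of "{x, y} \<inter> ends f"] ef by auto
        ultimately have "card ({x, y} \<union> ends f) = 3" using cUI ci by linarith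
        hence "card {q\<in>FB. q \<inter> ends f = {}} = 3" unfolding eqB
          using card_p2[of "V - ({x, y} \<union> ends f)"] fV cB by (simp add: choose_two)
        thus ?thesis using c1 by simp
      qed
    qed
    also have "\<dots> = 2 * (\<Sum>q\<in>FF. ?d q)"
      using dc[OF fE fF] by (simp add: sum_distrib_left)
    finally show ?thesis .
  qed
  have "int (9 * card E) \<le> 22 * K" using key split SF SA by linarith
  hence "real_of_int (int (9 * card E)) \<le> real_of_int (22 * K)" by (simp only: of_int_le_iff)
  hence "9 * real (card E) \<le> 22 * real_of_int K" by simp
  thus ?thesis by simp
qed

theorem mainTheorem6:
  fixes V :: "'a set" and E :: "'e set" and ends :: "'e \<Rightarrow> 'a set" and D :: nat
  assumes "D > 0"
    and "loopless_multigraph V E ends"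
    and "meets_all_but E ends (int D - 2)"
  shows "(\<forall>h. h \<ge> 6 \<and> is_complete_graph V (underlying_edges E ends) h
              \<longrightarrow> real (card E) \<le> 5 / 2 * (real D - 2))
       \<and> (\<forall>h. h \<ge> 7 \<and> is_complete_minus_edge V (underlying_edges E ends) h
              \<longrightarrow> real (card E) \<le> 20 / 9 * (real D - 2))
       \<and> (is_complete_minus_edge V (underlying_edges E ends) 6
              \<longrightarrow> real (card E) \<le> 22 / 9 * (real D - 2))"
  using part1[OF assms(2,3)] part2[OF assms(2,3)] part3[OF assms(2,3)] by auto

end
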